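(* Let $p$ be an odd prime and $m,r$ positive integers. Then $S_{mp^r+1}\equiv 4(mp^r+1)S_{mp^{r-1}}\pmod{p^{2r}}$.
   Context: $(S_n)_{n\ge0}$ is the integer sequence defined by $S_0=1$, $S_1=4$ and $(n+1)^2S_{n+1}=4(3n^2+3n+1)S_n-32n^2S_{n-1}$ for $n\ge1$; equivalently $S_n=\sum_{k=0}^n\binom nk\binom{2k}k\binom{2n-2k}{n-k}$. *)

theory Defs
  imports "HOL-Number_Theory.Number_Theory"
begin

definition S :: "nat \<Rightarrow> int" where
  "S n = (\<Sum>k=0..n. int (n choose k) * int ((2*k) choose k) * int ((2*n - 2*k) choose (n - k)))"

end

theory Submission
  imports Defs
begin

lemma Suc_div_split:
  fixes d n :: nat assumes "d > 0"
  shows "Suc n div d = n div d + (if d dvd Suc n then 1 else 0)"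
  using assms by (simp add: div_Suc dvd_eq_mod_eq_0)

lemma mult_le_self:
  fixes p n :: nat assumes "prime p" "n > 0"
  shows "multiplicity p n \<le> n"
proof -
  have "p ^ multiplicity p n dvd n" by (rule multiplicity_dvd)
  then have "p ^ multiplicity p n \<le> n" using assms by (simp add: dvd_imp_le)
  moreover have "multiplicity p n < p ^ multiplicity p n"
  proof -
    have "2 \<le> p" using assms prime_ge_2_nat by blast
    then have "(2::nat) ^ multiplicity p n \<le> p ^ multiplicity p n" by (rule power_mono) simp
    moreover have "multiplicity p n < 2 ^ multiplicity p n" by (rule less_exp)
    ultimately show ?thesis by linarith
  qed
  ultimately show ?thesis by linarith
qed

lemma count_pow_dvd:
  fixes p n B :: nat assumes "prime p" "n > 0" "n \<le> B"
  shows "card {i\<in>{1..B}. p ^ i dvd n} = multiplicity p n"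
proof -
  have "{i\<in>{1..B}. p ^ i dvd n} = {1..multiplicity p n}"
  proof -
    have h1: "multiplicity p n \<le> B" using mult_le_self[OF assms(1,2)] assms(3) by linarith
    have h2: "p ^ i dvd n \<longleftrightarrow> i \<le> multiplicity p n" for i
    proof (rule power_dvd_iff_le_multiplicity)
      show "n \<noteq> 0" using assms by simp
      show "\<not> is_unit p" using prime_gt_1_nat[OF assms(1)] by simp
    qed
    have "x \<in> {i\<in>{1..B}. p ^ i dvd n} \<longleftrightarrow> x \<in> {1..multiplicity p n}" for x
      using h1 h2[of x] by (simp only: mem_Collect_eq atLeastAtMost_iff) linarith
    then show ?thesis by blast
  qed
  then show ?thesis by simp
qed

lemma legendre:
  fixes p :: nat assumes "prime p"
  shows "n \<le> B \<Longrightarrow> multiplicity p (fact n :: nat) = (\<Sum>i\<in>{1..B}. n div p ^ i)"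
proof (induction n)
  case 0
  then show ?case by simp
next
  case (Suc n)
  have pp: "p ^ i > 0" for i using assms prime_gt_0_nat by simp
  have "multiplicity p (fact (Suc n) :: nat) = multiplicity p (Suc n * fact n)"
    by (simp add: fact_Suc)
  also have "\<dots> = multiplicity p (Suc n) + multiplicity p (fact n :: nat)"
    using assms by (intro prime_elem_multiplicity_mult_distrib) auto
  also have "multiplicity p (fact n :: nat) = (\<Sum>i\<in>{1..B}. n div p ^ i)"
    using Suc by simp
  also have "multiplicity p (Suc n) = card {i\<in>{1..B}. p ^ i dvd Suc n}"
    using count_pow_dvd[OF assms, of "Suc n" B] Suc.prems by simp
  also have "\<dots> = (\<Sum>i\<in>{1..B}. if p ^ i dvd Suc n then 1 else 0)"
    by (subst sum.inter_filter[symmetric]) auto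
  finally show ?case
    by (simp add: Suc_div_split[OF pp] sum.distrib)
qed


lemma div2_split:
  fixes d k :: nat assumes "d > 0"
  shows "(2*k) div d = 2*(k div d) + (if d \<le> 2*(k mod d) then 1 else 0)"
proof -
  have k: "k = d * (k div d) + k mod d" by simp
  have r: "k mod d < d" using assms by simp
  have "2*k = d * (2*(k div d)) + 2*(k mod d)" using k by (metis add_mult_distrib2 mult.left_commute)
  then have "(2*k) div d = 2*(k div d) + (2*(k mod d)) div d" using assms by simp
  moreover have "(2*(k mod d)) div d = (if d \<le> 2*(k mod d) then 1 else 0)"
  proof (cases "d \<le> 2*(k mod d)")
    case True
    then have "2*(k mod d) = d + (2*(k mod d) - d)" by simp
    moreover have "2*(k mod d) - d < d" using r by linarith
    ultimately show ?thesis using True assms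
      by (metis add_cancel_right_right div_add_self1 div_less less_not_refl2 plus_1_eq_Suc div_self
          One_nat_def add.commute)
  next
    case False
    then show ?thesis by simp
  qed
  ultimately show ?thesis by simp
qed

lemma mult_central:
  fixes p k B :: nat assumes "prime p" "2*k \<le> B"
  shows "multiplicity p (2*k choose k) = card {i\<in>{1..B}. p ^ i \<le> 2*(k mod p ^ i)}"
proof -
  have pp: "p ^ i > 0" for i using assms prime_gt_0_nat by simp
  have f: "fact (2*k) = fact k * fact k * (2*k choose k :: nat)"
    using binomial_fact_lemma[of k "2*k"] by (simp add: mult_2)
  have "multiplicity p (fact (2*k) :: nat) = multiplicity p (fact k * fact k :: nat) + multiplicity p (2*k choose k)"
    unfolding f using assms by (intro prime_elem_multiplicity_mult_distrib) auto
  also have "multiplicity p (fact k * fact k :: nat) = 2 * multiplicity p (fact k :: nat)"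
    using assms by (subst prime_elem_multiplicity_mult_distrib) auto
  finally have e: "multiplicity p (fact (2*k) :: nat) = 2 * multiplicity p (fact k :: nat) + multiplicity p (2*k choose k)" .
  have l1: "multiplicity p (fact (2*k) :: nat) = (\<Sum>i\<in>{1..B}. (2*k) div p ^ i)"
    using legendre[OF assms(1)] assms(2) by simp
  have l2: "multiplicity p (fact k :: nat) = (\<Sum>i\<in>{1..B}. k div p ^ i)"
    using legendre[OF assms(1)] assms(2) by simp
  have "(\<Sum>i\<in>{1..B}. (2*k) div p ^ i) = 2 * (\<Sum>i\<in>{1..B}. k div p ^ i) + (\<Sum>i\<in>{1..B}. if p ^ i \<le> 2*(k mod p ^ i) then 1 else 0)"
    by (simp add: div2_split[OF pp] sum.distrib sum_distrib_left)
  also have "(\<Sum>i\<in>{1..B}. if p ^ i \<le> 2*(k mod p ^ i) then 1 else (0::nat)) = card {i\<in>{1..B}. p ^ i \<le> 2*(k mod p ^ i)}"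
    by (subst sum.inter_filter[symmetric]) auto
  finally show ?thesis using e l1 l2 by linarith
qed

lemma central_prod_dvd:
  fixes p k l :: nat assumes "prime p" and I: "\<And>i. i \<in> I \<Longrightarrow> i \<ge> 1 \<and> (p ^ i \<le> 2*(k mod p ^ i) \<or> p ^ i \<le> 2*(l mod p ^ i))"
  shows "p ^ card I dvd (2*k choose k) * (2*l choose l)"
proof -
  define B where "B = 2*k + 2*l"
  have p2: "p \<ge> 2" using assms prime_ge_2_nat by blast
  have ilt: "i < p ^ i" for i using less_exp[of i] power_mono[OF p2, of i] by linarith
  have sub: "I \<subseteq> {i\<in>{1..B}. p ^ i \<le> 2*(k mod p ^ i)} \<union> {i\<in>{1..B}. p ^ i \<le> 2*(l mod p ^ i)}"
  proof
    fix i assume "i \<in> I"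
    note h = I[OF this]
    have "k mod p ^ i \<le> k" "l mod p ^ i \<le> l" by auto
    then have "i \<le> B" using h ilt[of i] unfolding B_def by linarith
    then show "i \<in> {i\<in>{1..B}. p ^ i \<le> 2*(k mod p ^ i)} \<union> {i\<in>{1..B}. p ^ i \<le> 2*(l mod p ^ i)}"
      using h by auto
  qed
  have "card I \<le> card ({i\<in>{1..B}. p ^ i \<le> 2*(k mod p ^ i)} \<union> {i\<in>{1..B}. p ^ i \<le> 2*(l mod p ^ i)})"
    by (rule card_mono[OF _ sub]) auto
  also have "\<dots> \<le> card {i\<in>{1..B}. p ^ i \<le> 2*(k mod p ^ i)} + card {i\<in>{1..B}. p ^ i \<le> 2*(l mod p ^ i)}"
    by (rule card_Un_le)
  also have "\<dots> = multiplicity p (2*k choose k) + multiplicity p (2*l choose l)"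
    using mult_central[OF assms(1), of k B] mult_central[OF assms(1), of l B] unfolding B_def by simp
  also have "\<dots> = multiplicity p ((2*k choose k) * (2*l choose l))"
    using assms by (subst prime_elem_multiplicity_mult_distrib) auto
  finally have "card I \<le> multiplicity p ((2*k choose k) * (2*l choose l))" .
  then show ?thesis
    using power_dvd_iff_le_multiplicity[of "(2*k choose k) * (2*l choose l)" p "card I"] prime_gt_1_nat[OF assms(1)]
    by simp
qed


lemma binom_dvd:
  fixes p e u n k :: nat
  assumes "prime p" "p ^ e dvd n" "\<not> p ^ (u+1) dvd k" "u \<le> e"
  shows "p ^ (e - u) dvd (n choose k)"
proof (cases "n choose k = 0")
  case True then show ?thesis by (metis dvd_0_right)
next
  case False
  have k0: "k > 0" using assms(3) by (cases k) auto
  have nu: "\<not> is_unit p" using prime_gt_1_nat[OF assms(1)] by simp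
  have "k * (n choose k) = n * (n - 1 choose (k - 1))" using times_binomial_minus1_eq[OF k0] .
  then have "p ^ e dvd k * (n choose k)" using assms(2) by (metis dvd_mult2)
  then have "e \<le> multiplicity p (k * (n choose k))"
    using power_dvd_iff_le_multiplicity[OF _ nu] k0 False by simp
  also have "\<dots> = multiplicity p k + multiplicity p (n choose k)"
    using assms(1) k0 False by (intro prime_elem_multiplicity_mult_distrib) auto
  finally have 1: "e \<le> multiplicity p k + multiplicity p (n choose k)" .
  have "multiplicity p k \<le> u"
    using power_dvd_iff_le_multiplicity[OF _ nu, of k "u+1"] k0 assms(3) by simp
  then have "e - u \<le> multiplicity p (n choose k)" using 1 by linarith
  then show ?thesis using power_dvd_iff_le_multiplicity[OF _ nu] False by simp
qed

lemma mod_sum_cases: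
  fixes a b d :: nat assumes "d > 0"
  shows "a mod d + b mod d = (a + b) mod d \<or> a mod d + b mod d = (a + b) mod d + d"
proof -
  have "(a mod d + b mod d) mod d = (a + b) mod d" by (simp add: mod_add_eq)
  moreover have "a mod d + b mod d < 2 * d" using mod_less_divisor[OF assms, of a] mod_less_divisor[OF assms, of b] by linarith
  ultimately show ?thesis
    by (metis (no_types, lifting) add.commute le_add_diff_inverse le_mod_geq mod_less
        mult_2 not_le add_less_cancel_left)
qed

lemma central_dvd_A:
  fixes p e u n k :: nat
  assumes "prime p" "odd p" "p ^ e dvd n" "\<not> p ^ (u+1) dvd k" "u \<le> e" "k \<le> n"
  shows "p ^ (e - u) dvd (2*k choose k) * (2*(n-k) choose (n-k))"
proof -
  have "p ^ card {u+1..e} dvd (2*k choose k) * (2*(n-k) choose (n-k))"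
  proof (rule central_prod_dvd[OF assms(1)])
    fix i assume i: "i \<in> {u+1..e}"
    define d where "d = p ^ i"
    have d0: "d > 0" unfolding d_def using assms(1) prime_gt_0_nat by simp
    have dodd: "odd d" unfolding d_def using assms(2) by simp
    have "p ^ (u+1) dvd d" unfolding d_def using i by (intro le_imp_power_dvd) auto
    then have km: "k mod d \<noteq> 0" using assms(4) by (meson dvd_trans mod_0_imp_dvd)
    have "d dvd n" unfolding d_def using i assms(3) by (meson atLeastAtMost_iff dvd_trans le_imp_power_dvd)
    then have nm: "(k + (n - k)) mod d = 0" using assms(6) by simp
    have "k mod d + (n-k) mod d = d"
      using mod_sum_cases[OF d0, of k "n-k"] nm km by auto
    then have "d \<le> 2*(k mod d) \<or> d \<le> 2*((n-k) mod d)" by linarith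
    then show "i \<ge> 1 \<and> (p ^ i \<le> 2*(k mod p ^ i) \<or> p ^ i \<le> 2*((n-k) mod p ^ i))"
      using i unfolding d_def by auto
  qed
  then show ?thesis by simp
qed

lemma central_dvd_B:
  fixes p r N k :: nat
  assumes "prime p" "odd p" "p ^ r dvd N" "k \<le> N + 1" "k mod p \<noteq> 0" "k mod p \<noteq> 1"
  shows "p ^ r dvd (2*k choose k) * (2*(N+1-k) choose (N+1-k))"
proof -
  have "p ^ card {1..r} dvd (2*k choose k) * (2*(N+1-k) choose (N+1-k))"
  proof (rule central_prod_dvd[OF assms(1)])
    fix i assume i: "i \<in> {1..r}"
    define d where "d = p ^ i"
    have p1: "p > 1" using assms(1) prime_gt_1_nat by simp
    have d1: "d > 1" unfolding d_def using p1 i one_less_power[of p i] by simp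
    have pd: "p dvd d" unfolding d_def using i by simp
    have "d dvd N" unfolding d_def using i assms(3) by (meson atLeastAtMost_iff dvd_trans le_imp_power_dvd)
    then have nm: "(k + (N + 1 - k)) mod d = 1" using assms(4) d1
      by (metis le_add_diff_inverse mod_add_left_eq mod_0_imp_dvd dvd_imp_mod_0 add_0 mod_less)
    have ka: "k mod d \<noteq> 0" using assms(5) pd by (metis mod_mod_cancel mod_0)
    have kb: "k mod d \<noteq> 1" using assms(6) pd p1 by (metis mod_mod_cancel mod_less)
    have "k mod d + (N+1-k) mod d = d + 1"
    proof -
      have "k mod d + (N+1-k) mod d \<noteq> 1" using ka kb by linarith
      then show ?thesis using mod_sum_cases[of d k "N+1-k"] nm d1 by auto
    qed
    then have "d \<le> 2*(k mod d) \<or> d \<le> 2*((N+1-k) mod d)" by linarith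
    then show "i \<ge> 1 \<and> (p ^ i \<le> 2*(k mod p ^ i) \<or> p ^ i \<le> 2*((N+1-k) mod p ^ i))"
      using i unfolding d_def by auto
  qed
  then show ?thesis by simp
qed


lemma binom_prod:
  "int (n + k choose k) * fact k = (\<Prod>j\<in>{1..k}. int n + int j)"
proof (induction k)
  case 0 then show ?case by simp
next
  case (Suc k)
  have e: "Suc k * (n + Suc k choose Suc k) = (n + Suc k) * (n + k choose k)"
    using Suc_times_binomial[of k "n+k"] by simp
  have "int (n + Suc k choose Suc k) * fact (Suc k) = int (Suc k * (n + Suc k choose Suc k)) * fact k"
    unfolding fact_Suc of_nat_mult by (simp only: ac_simps)
  also have "\<dots> = (int n + int (Suc k)) * (int (n + k choose k) * fact k)"
    unfolding e of_nat_mult by (simp only: ac_simps of_nat_add)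
  also have "\<dots> = (\<Prod>j\<in>{1..Suc k}. int n + int j)"
    using Suc by (simp add: prod.nat_ivl_Suc' mult.commute)
  finally show ?case .
qed

lemma split_mult:
  fixes p b :: nat and g :: "nat \<Rightarrow> int" assumes "p > 0"
  shows "(\<Prod>j\<in>{1..b*p}. g j) = (\<Prod>j\<in>{j\<in>{1..b*p}. \<not> p dvd j}. g j) * (\<Prod>i\<in>{1..b}. g (i*p))"
proof -
  have un: "{1..b*p} = {j\<in>{1..b*p}. \<not> p dvd j} \<union> (\<lambda>i. i*p) ` {1..b}"
  proof (rule equalityI[OF subsetI subsetI])
    fix x assume x: "x \<in> {1..b*p}"
    show "x \<in> {j\<in>{1..b*p}. \<not> p dvd j} \<union> (\<lambda>i. i*p) ` {1..b}"
    proof (cases "p dvd x")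
      case True
      then obtain i where i: "x = i * p" by (metis dvd_def mult.commute)
      then have "i \<ge> 1" "i \<le> b" using x assms by auto
      then show ?thesis using i by auto
    next
      case False then show ?thesis using x by auto
    qed
  next
    fix x assume "x \<in> {j\<in>{1..b*p}. \<not> p dvd j} \<union> (\<lambda>i. i*p) ` {1..b}"
    then show "x \<in> {1..b*p}" using assms by auto
  qed
  have dis: "{j\<in>{1..b*p}. \<not> p dvd j} \<inter> (\<lambda>i. i*p) ` {1..b} = {}" by auto
  have inj: "inj_on (\<lambda>i. i*p) {1..b}" using assms by (auto simp: inj_on_def)
  show ?thesis
    apply (subst un)
    apply (subst prod.union_disjoint)
    using dis inj by (auto simp: prod.reindex)
qed

lemma split_pair:
  fixes p B :: nat and g :: "nat \<Rightarrow> int"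
  assumes "prime p" "odd p" "p dvd B"
  shows "(\<Prod>j\<in>{j\<in>{1..B}. \<not> p dvd j}. g j) = (\<Prod>j\<in>{j\<in>{1..B}. \<not> p dvd j \<and> 2*j < B}. g j * g (B - j))"
proof -
  let ?J = "{j\<in>{1..B}. \<not> p dvd j}"
  let ?K = "{j\<in>{1..B}. \<not> p dvd j \<and> 2*j < B}"
  have no_half: "2*j \<noteq> B" if "\<not> p dvd j" for j
  proof
    assume "2*j = B"
    then have "p dvd 2*j" using assms(3) by simp
    then have "p dvd 2 \<or> p dvd j" using assms(1) prime_dvd_mult_nat by blast
    moreover have "\<not> p dvd 2"
    proof
      assume "p dvd 2" then have "p \<le> 2" by (simp add: dvd_imp_le)
      then have "p = 2" using prime_ge_2_nat[OF assms(1)] by simp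
      then show False using assms(2) by simp
    qed
    ultimately show False using that by blast
  qed
  have un: "?J = ?K \<union> (\<lambda>j. B - j) ` ?K"
  proof (rule equalityI[OF subsetI subsetI])
    fix x assume x: "x \<in> ?J"
    show "x \<in> ?K \<union> (\<lambda>j. B - j) ` ?K"
    proof (cases "2*x < B")
      case True then show ?thesis using x by auto
    next
      case False
      then have h: "2*x > B" using no_half x by fastforce
      have xB: "x < B"
      proof (rule ccontr)
        assume "\<not> x < B" then have "x = B" using x by auto
        then show False using x assms(3) by auto
      qed
      have "\<not> p dvd (B - x)"
      proof
        assume "p dvd B - x"
        then have "p dvd B - (B - x)" using assms(3) by (simp add: dvd_diff_nat)
        then show False using x xB by auto
      qed
      then have "B - x \<in> ?K" using h xB by auto
      moreover have "x = B - (B - x)" using xB by simp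
      ultimately show ?thesis by blast
    qed
  next
    fix x assume x: "x \<in> ?K \<union> (\<lambda>j. B - j) ` ?K"
    show "x \<in> ?J"
    proof (cases "x \<in> ?K")
      case True then show ?thesis by auto
    next
      case False
      then obtain j where j: "j \<in> ?K" "x = B - j" using x by auto
      have "\<not> p dvd (B - j)"
      proof
        assume "p dvd B - j"
        then have "p dvd B - (B - j)" using assms(3) by (simp add: dvd_diff_nat)
        then show False using j by auto
      qed
      then show ?thesis using j by auto
    qed
  qed
  have dis: "?K \<inter> (\<lambda>j. B - j) ` ?K = {}" by auto
  have inj: "inj_on (\<lambda>j. B - j) ?K" by (auto simp: inj_on_def)
  have "(\<Prod>j\<in>?J. g j) = (\<Prod>j\<in>?K. g j) * (\<Prod>j\<in>(\<lambda>j. B - j) ` ?K. g j)"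
    by (subst un, subst prod.union_disjoint) (use dis in auto)
  also have "(\<Prod>j\<in>(\<lambda>j. B - j) ` ?K. g j) = (\<Prod>j\<in>?K. g (B - j))"
    using inj by (simp add: prod.reindex)
  finally show ?thesis by (simp add: prod.distrib)
qed


lemma jac:
  fixes p s a b :: nat
  assumes p: "prime p" "odd p" and sa: "p ^ s dvd a" and sb: "p ^ s dvd b" and ba: "b \<le> a"
  shows "\<exists>U V :: int. coprime U (int p) \<and> int (a*p choose b*p) * U = int (a choose b) * V
          \<and> [V = U] (mod int p ^ (2*s+2))"
proof -
  define c :: int where "c = int ((a-b)*p)"
  define B where "B = b*p"
  define J where "J = {j\<in>{1..B}. \<not> p dvd j}"
  define K where "K = {j\<in>{1..B}. \<not> p dvd j \<and> 2*j < B}"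
  define U where "U = (\<Prod>j\<in>J. int j)"
  define V where "V = (\<Prod>j\<in>J. c + int j)"
  have p0: "p > 0" using p prime_gt_0_nat by simp
  have h1: "int (a*p choose b*p) * fact (b*p) = (\<Prod>j\<in>{1..b*p}. c + int j)"
  proof -
    have "(a-b)*p + b*p = a*p" using ba by (metis le_add_diff_inverse2 add_mult_distrib)
    then show ?thesis using binom_prod[of "(a-b)*p" "b*p"] unfolding c_def by simp
  qed
  have pb: "(\<Prod>i\<in>{1..b}. int (i*p)) = int p ^ b * fact b"
    by (simp add: prod.distrib fact_prod mult.commute)
  have h2: "(fact (b*p) :: int) = U * (int p ^ b * fact b)"
  proof -
    have "(fact (b*p) :: int) = (\<Prod>j\<in>{1..b*p}. int j)" by (simp add: fact_prod)
    also have "\<dots> = U * (\<Prod>i\<in>{1..b}. int (i*p))"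
      unfolding U_def J_def B_def by (rule split_mult[OF p0])
    finally show ?thesis using pb by simp
  qed
  have h3: "(\<Prod>j\<in>{1..b*p}. c + int j) = V * (int p ^ b * (int (a choose b) * fact b))"
  proof -
    have "(\<Prod>j\<in>{1..b*p}. c + int j) = V * (\<Prod>i\<in>{1..b}. c + int (i*p))"
      unfolding V_def J_def B_def by (rule split_mult[OF p0])
    also have "(\<Prod>i\<in>{1..b}. c + int (i*p)) = (\<Prod>i\<in>{1..b}. int p * (int (a-b) + int i))"
      unfolding c_def using ba by (intro prod.cong) (auto simp: algebra_simps of_nat_diff)
    also have "\<dots> = int p ^ b * (\<Prod>i\<in>{1..b}. int (a-b) + int i)"
      by (simp add: prod.distrib)
    also have "(\<Prod>i\<in>{1..b}. int (a-b) + int i) = int (a choose b) * fact b"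
      using binom_prod[of "a-b" b] ba by simp
    finally show ?thesis .
  qed
  have nz: "int p ^ b * fact b \<noteq> (0::int)" using p0 by simp
  have eq: "int (a*p choose b*p) * U = int (a choose b) * V"
  proof -
    have "(int (a*p choose b*p) * U) * (int p ^ b * fact b) = (int (a choose b) * V) * (int p ^ b * fact b)"
      using h1 h2 h3 by (simp add: algebra_simps)
    then show ?thesis using nz by (simp only: mult_cancel_right) simp
  qed
  have cop: "coprime U (int p)"
    unfolding U_def
  proof (rule prod_coprime_left)
    fix j assume "j \<in> J"
    then have "\<not> p dvd j" unfolding J_def by simp
    then have "coprime p j" using prime_imp_coprime_nat[OF p(1)] by blast
    then show "coprime (int j) (int p)" by (simp add: coprime_int_iff coprime_commute)
  qed
  have pB: "p dvd B" unfolding B_def by simp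
  have U2: "U = (\<Prod>j\<in>K. int j * int (B - j))"
    unfolding U_def J_def K_def by (rule split_pair[OF p pB])
  have V2: "V = (\<Prod>j\<in>K. (c + int j) * (c + int (B - j)))"
    unfolding V_def J_def K_def by (rule split_pair[OF p pB])
  have key: "int p ^ (2*s+2) dvd c * (c + int B)"
  proof -
    have "c + int B = int p * int a" unfolding c_def B_def using ba
      by (simp add: algebra_simps of_nat_diff)
    then have "c * (c + int B) = (int p * int (a-b)) * (int p * int a)" unfolding c_def by (simp add: mult.commute)
    moreover have "int p ^ (s+1) dvd int p * int (a-b)"
    proof -
      have "p ^ s dvd a - b" using sa sb by (rule dvd_diff_nat)
      then have "int p ^ s dvd int (a-b)" by (metis of_nat_dvd_iff of_nat_power)
      then show ?thesis by (simp add: mult_dvd_mono)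
    qed
    moreover have "int p ^ (s+1) dvd int p * int a"
    proof -
      have "int p ^ s dvd int a" using sa by (metis of_nat_dvd_iff of_nat_power)
      then show ?thesis by (simp add: mult_dvd_mono)
    qed
    ultimately show ?thesis
    proof -
      assume e: "c * (c + int B) = (int p * int (a-b)) * (int p * int a)"
        and d1: "int p ^ (s+1) dvd int p * int (a-b)" and d2: "int p ^ (s+1) dvd int p * int a"
      have m: "int p ^ (s+1) * int p ^ (s+1) dvd (int p * int (a-b)) * (int p * int a)"
        using d1 d2 by (rule mult_dvd_mono)
      have q: "int p ^ (s+1) * int p ^ (s+1) = int p ^ (2*s+2)"
        by (simp only: power_add[symmetric]) (simp add: mult_2)
      show ?thesis using m unfolding q e[symmetric] .
    qed
  qed
  have cong: "[V = U] (mod int p ^ (2*s+2))"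
    unfolding U2 V2
  proof (rule cong_prod)
    fix j assume j: "j \<in> K"
    then have jB: "j < B" unfolding K_def by auto
    have "(c + int j) * (c + int (B - j)) = int j * int (B - j) + c * (c + int B)"
      using jB by (simp add: of_nat_diff algebra_simps)
    then show "[(c + int j) * (c + int (B - j)) = int j * int (B - j)] (mod int p ^ (2*s+2))"
      using key by (simp add: cong_iff_dvd_diff)
  qed
  show ?thesis using cop eq cong by blast
qed


definition A :: "nat \<Rightarrow> nat \<Rightarrow> int" where
  "A n k = int (n choose k) * int ((2*k) choose k) * int ((2*n - 2*k) choose (n - k))"

lemma S_A: "S n = (\<Sum>k=0..n. A n k)"
  unfolding S_def A_def by simp

lemma A_sym: "k \<le> n \<Longrightarrow> A n (n - k) = A n k"
  unfolding A_def using binomial_symmetric[of k n]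
  by (simp add: diff_mult_distrib2[symmetric] algebra_simps)

lemma int_pow_dvd: "p ^ e dvd (x::nat) \<Longrightarrow> int p ^ e dvd int x"
  by (metis of_nat_dvd_iff of_nat_power)

lemma A_dvd:
  fixes p e u n k :: nat
  assumes "prime p" "odd p" "p ^ e dvd n" "\<not> p ^ (u+1) dvd k" "u \<le> e" "k \<le> n"
  shows "int p ^ (2*(e-u)) dvd A n k"
proof -
  have 1: "p ^ (e - u) dvd (n choose k)" using binom_dvd[OF assms(1,3,4,5)] .
  have 2: "p ^ (e - u) dvd (2*k choose k) * (2*(n-k) choose (n-k))"
    using central_dvd_A[OF assms] .
  have "p ^ (e-u) * p ^ (e-u) dvd (n choose k) * ((2*k choose k) * (2*(n-k) choose (n-k)))"
    using 1 2 by (rule mult_dvd_mono)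
  then have "p ^ (2*(e-u)) dvd (n choose k) * (2*k choose k) * (2*(n-k) choose (n-k))"
    by (simp add: power_add[symmetric] mult_2 mult.assoc)
  then have "int p ^ (2*(e-u)) dvd int ((n choose k) * (2*k choose k) * (2*(n-k) choose (n-k)))"
    by (rule int_pow_dvd)
  then show ?thesis unfolding A_def by (simp add: diff_mult_distrib2)
qed



lemma obtain_t:
  fixes p r j :: nat assumes "prime p"
  shows "\<exists>t. t \<le> r - 1 \<and> p ^ t dvd j \<and> (t = r - 1 \<or> \<not> p ^ (t+1) dvd j)"
proof (cases "p ^ (r-1) dvd j")
  case True then show ?thesis by blast
next
  case False
  then have j0: "j \<noteq> 0" by (metis dvd_0_right)
  have nu: "\<not> is_unit p" using prime_gt_1_nat[OF assms] by simp
  define t where "t = multiplicity p j"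
  have "p ^ t dvd j" unfolding t_def by (rule multiplicity_dvd)
  moreover have "\<not> p ^ (t+1) dvd j" using power_dvd_iff_le_multiplicity[OF j0 nu, of "t+1"] unfolding t_def by simp
  moreover have "t < r - 1" using power_dvd_iff_le_multiplicity[OF j0 nu, of "r-1"] False unfolding t_def by simp
  ultimately show ?thesis by (intro exI[of _ t]) auto
qed

lemma A_jac:
  fixes p r N' j :: nat
  assumes p: "prime p" "odd p" and r: "r \<ge> 1" and N': "p ^ (r-1) dvd N'" and j: "j \<le> N'"
  shows "[A (N'*p) (j*p) = A N' j] (mod int p ^ (2*r))"
    and "int p ^ (2*r) dvd (int ((N'-j)*p))^2 * A (N'*p) (j*p)"
proof -
  obtain t where t: "t \<le> r - 1" "p ^ t dvd j" "t = r - 1 \<or> \<not> p ^ (t+1) dvd j"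
    using obtain_t[OF p(1)] by blast
  have tN: "p ^ t dvd N'" using t(1) N' by (meson dvd_trans le_imp_power_dvd)
  have tNj: "p ^ t dvd N' - j" using tN t(2) by (rule dvd_diff_nat)
  obtain U1 V1 where J1: "coprime U1 (int p)" "int (N'*p choose j*p) * U1 = int (N' choose j) * V1"
    "[V1 = U1] (mod int p ^ (2*t+2))"
    using jac[OF p tN t(2) j] by blast
  obtain U2 V2 where J2: "coprime U2 (int p)" "int ((2*j)*p choose j*p) * U2 = int (2*j choose j) * V2"
    "[V2 = U2] (mod int p ^ (2*t+2))"
    using jac[OF p _ t(2), of "2*j"] t(2) by auto
  obtain U3 V3 where J3: "coprime U3 (int p)" "int ((2*(N'-j))*p choose (N'-j)*p) * U3 = int (2*(N'-j) choose (N'-j)) * V3"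
    "[V3 = U3] (mod int p ^ (2*t+2))"
    using jac[OF p _ tNj, of "2*(N'-j)"] tNj by auto
  define U where "U = U1 * U2 * U3"
  define V where "V = V1 * V2 * V3"
  have e1: "A (N'*p) (j*p) = int (N'*p choose j*p) * int ((2*j)*p choose j*p) * int ((2*(N'-j))*p choose (N'-j)*p)"
    unfolding A_def by (simp add: diff_mult_distrib diff_mult_distrib2 mult.assoc)
  have e2: "A N' j = int (N' choose j) * int (2*j choose j) * int (2*(N'-j) choose (N'-j))"
    unfolding A_def by (simp add: diff_mult_distrib2)
  have eq: "A (N'*p) (j*p) * U = A N' j * V"
  proof -
    have "A (N'*p) (j*p) * U = (int (N'*p choose j*p) * U1) * (int ((2*j)*p choose j*p) * U2)
        * (int ((2*(N'-j))*p choose (N'-j)*p) * U3)" unfolding e1 U_def by (simp only: ac_simps)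
    also have "\<dots> = (int (N' choose j) * V1) * (int (2*j choose j) * V2) * (int (2*(N'-j) choose (N'-j)) * V3)"
      using J1(2) J2(2) J3(2) by simp
    also have "\<dots> = A N' j * V" unfolding e2 V_def by (simp only: ac_simps)
    finally show ?thesis .
  qed
  have cop: "coprime U (int p)" unfolding U_def using J1(1) J2(1) J3(1) by simp
  have cong: "[V = U] (mod int p ^ (2*t+2))" unfolding U_def V_def using J1(3) J2(3) J3(3)
    by (intro cong_mult) auto
  have dA: "int p ^ (2*(r-1-t)) dvd A N' j"
  proof (cases "t = r - 1")
    case True then show ?thesis by simp
  next
    case False
    then have "\<not> p ^ (t+1) dvd j" using t(3) by simp
    then show ?thesis using A_dvd[OF p N' _ t(1) j] by simp
  qed
  have pw: "int p ^ (2*r) = int p ^ (2*(r-1-t)) * int p ^ (2*t+2)"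
  proof -
    have "2*r = 2*(r-1-t) + (2*t+2)" using t(1) r by simp
    then show ?thesis by (metis power_add)
  qed
  have "int p ^ (2*r) dvd A N' j * (V - U)"
    unfolding pw using dA cong by (intro mult_dvd_mono) (auto simp: cong_iff_dvd_diff)
  then have "[U * A (N'*p) (j*p) = U * A N' j] (mod int p ^ (2*r))"
    using eq by (simp add: cong_iff_dvd_diff algebra_simps)
  moreover have "coprime U (int p ^ (2*r))" using cop by simp
  ultimately show "[A (N'*p) (j*p) = A N' j] (mod int p ^ (2*r))"
    using cong_mult_lcancel by blast
  have "int p ^ (2*(r-1-t)) dvd A (N'*p) (j*p) * U" using eq dA by simp
  then have d1: "int p ^ (2*(r-1-t)) dvd A (N'*p) (j*p)"
  proof -
    have "coprime (int p ^ (2*(r-1-t))) U" using cop by (simp add: coprime_commute)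
    then show ?thesis using \<open>int p ^ (2*(r-1-t)) dvd A (N'*p) (j*p) * U\<close>
      by (simp add: coprime_dvd_mult_left_iff)
  qed
  have "int p ^ (t+1) dvd int ((N'-j)*p)"
    using int_pow_dvd[OF tNj] by (simp add: mult_dvd_mono)
  then have d2: "int p ^ (2*t+2) dvd (int ((N'-j)*p))^2"
  proof -
    have "(int p ^ (t+1))^2 dvd (int ((N'-j)*p))^2" using \<open>int p ^ (t+1) dvd _\<close> by (rule dvd_power_same)
    moreover have "(int p ^ (t+1))^2 = int p ^ (2*t+2)" by (metis power_mult mult.commute mult_2 add_mult_distrib2 mult_1_right)
    ultimately show ?thesis by metis
  qed
  show "int p ^ (2*r) dvd (int ((N'-j)*p))^2 * A (N'*p) (j*p)"
    unfolding pw using d1 d2 by (simp add: mult_dvd_mono mult.commute)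
qed


lemma arith_aux:
  fixes M N a b c d e f :: nat
  assumes "(M+1)*a = (N+1)*f" "(M+1)*c = (2*M+2)*d" "(M+1)*d = (2*M+1)*e"
  shows "(M+1)^2*(a*b*c) = 2*(N+1)*(2*M+1)*(f*b*e)"
proof -
  have "(M+1)^2*(a*b*c) = ((M+1)*a)*b*((M+1)*c)" by (simp only: power2_eq_square mult.assoc mult.commute mult.left_commute)
  also have "\<dots> = ((N+1)*f)*b*((2*M+2)*d)" using assms by simp
  also have "\<dots> = 2*(N+1)*f*b*((M+1)*d)" by (simp add: algebra_simps)
  also have "\<dots> = 2*(N+1)*f*b*((2*M+1)*e)" using assms by simp
  finally show ?thesis by (simp only: mult.assoc mult.commute mult.left_commute)
qed

lemma succ_identity_nat:
  fixes N k :: nat assumes "k \<le> N"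
  shows "(N - k + 1)^2 * ((N+1 choose k) * (2*k choose k) * (2*(N+1) - 2*k choose (N+1-k)))
       = 2*(N+1)*(2*(N-k)+1) * ((N choose k) * (2*k choose k) * (2*N - 2*k choose (N-k)))"
proof -
  define M where "M = N - k"
  have c1: "(M+1) * (N+1 choose k) = (N+1) * (N choose k)"
    using binomial_absorb_comp[of "N+1" k] assms unfolding M_def by (simp add: Suc_diff_le)
  have c2: "(M+1) * (2*M+2 choose (M+1)) = (2*M+2) * (2*M+1 choose M)"
    using Suc_times_binomial[of M "2*M+1"] by (simp del: binomial_Suc_Suc)
  have c3: "(M+1) * (2*M+1 choose M) = (2*M+1) * (2*M choose M)"
    using binomial_absorb_comp[of "2*M+1" M] by (simp add: Suc_diff_le del: binomial_Suc_Suc)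
  have e1: "2*(N+1) - 2*k = 2*M+2" "N+1-k = M+1" "2*N - 2*k = 2*M" "N - k = M"
    using assms unfolding M_def by auto
  show ?thesis unfolding e1 by (rule arith_aux[OF c1 c2 c3])
qed

lemma succ_identity:
  fixes N k :: nat assumes "k \<le> N"
  shows "(int (N - k) + 1)^2 * A (N+1) k = 2 * int (N+1) * (2 * int (N-k) + 1) * A N k"
  using arg_cong[OF succ_identity_nat[OF assms], of int] unfolding A_def of_nat_mult of_nat_power of_nat_add of_nat_1 of_nat_numeral
  by (simp only: ac_simps)

lemma T0:
  fixes p r N' j :: nat
  assumes p: "prime p" "odd p" and r: "r \<ge> 1" and N': "p ^ (r-1) dvd N'" and j: "j \<le> N'"
  shows "[A (N'*p+1) (j*p) = 2 * int (N'*p+1) * A N' j] (mod int p ^ (2*r))"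
proof -
  define q where "q = int p ^ (2*r)"
  define N where "N = N'*p"
  define k where "k = j*p"
  define M where "M = int ((N'-j)*p)"
  have kN: "k \<le> N" unfolding k_def N_def using j by simp
  have MN: "int (N - k) = M" unfolding M_def N_def k_def by (simp add: diff_mult_distrib)
  define X where "X = A N k"
  define Y where "Y = A N' j"
  have h1: "[X = Y] (mod q)" unfolding X_def Y_def q_def N_def k_def using A_jac(1)[OF p r N' j] .
  have h2: "q dvd M^2 * X" unfolding X_def M_def q_def N_def k_def using A_jac(2)[OF p r N' j] .
  have id: "(M + 1)^2 * A (N+1) k = 2 * int (N+1) * (2 * M + 1) * X"
    using succ_identity[OF kN] unfolding MN X_def .
  have "2 * int (N+1) * (2 * M + 1) * X = 2 * int (N+1) * (M+1)^2 * X - 2 * int (N+1) * (M^2 * X)"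
    by (simp add: power2_eq_square algebra_simps)
  then have cc1: "[(M + 1)^2 * A (N+1) k = 2 * int (N+1) * (M+1)^2 * X] (mod q)"
    unfolding id using h2 by (simp add: cong_iff_dvd_diff)
  have cc2: "[2 * int (N+1) * (M+1)^2 * X = 2 * int (N+1) * (M+1)^2 * Y] (mod q)"
    using h1 by (intro cong_mult) auto
  have ee: "2 * int (N+1) * (M+1)^2 * Y = (M+1)^2 * (2 * int (N+1) * Y)"
    by (simp only: mult.assoc mult.commute mult.left_commute)
  have "[(M + 1)^2 * A (N+1) k = (M+1)^2 * (2 * int (N+1) * Y)] (mod q)"
    using cong_trans[OF cc1 cc2] unfolding ee .
  moreover have "coprime ((M+1)^2) q"
  proof -
    have "\<not> int p dvd M + 1"
    proof
      assume "int p dvd M + 1"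
      moreover have "int p dvd M" unfolding M_def by simp
      ultimately have "int p dvd 1" by (metis dvd_add_right_iff)
      then show False using p(1) by (metis int_dvd_int_iff of_nat_1 nat_dvd_1_iff_1 not_prime_1)
    qed
    then have "coprime (int p) (M+1)" using prime_imp_coprime_int[of "int p"] p(1) by simp
    then show ?thesis unfolding q_def by (simp add: coprime_commute)
  qed
  ultimately have "[A (N+1) k = 2 * int (N+1) * Y] (mod q)"
    using cong_mult_lcancel by blast
  then show ?thesis unfolding q_def N_def k_def Y_def .
qed

lemma T2:
  fixes p r N k :: nat
  assumes p: "prime p" "odd p" and N: "p ^ r dvd N" and k: "k \<le> N + 1" "k mod p \<noteq> 0" "k mod p \<noteq> 1"
  shows "int p ^ (2*r) dvd A (N+1) k"
proof -
  have k1: "k \<ge> 2" using k by (cases k; cases "k - 1") auto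
  have "\<not> p ^ (0+1) dvd (k - 1)"
  proof
    assume "p ^ (0+1) dvd k - 1"
    then have "(k - 1) mod p = 0" by simp
    moreover have "k = Suc (k-1)" using k1 by simp
    ultimately have "k mod p = Suc 0 mod p" by (metis mod_Suc_eq)
    then have "k mod p = 1" using prime_gt_1_nat[OF p(1)] by simp
    then show False using k by simp
  qed
  then have b1: "p ^ r dvd (N choose (k-1))" using binom_dvd[OF p(1) N, of 0 "k-1"] by simp
  have "k * (N+1 choose k) = (N+1) * (N choose (k-1))"
    using times_binomial_minus1_eq[of k "N+1"] k1 by simp
  then have "p ^ r dvd k * (N+1 choose k)" using b1 by (metis dvd_mult)
  moreover have "coprime (p ^ r) k"
  proof -
    have "\<not> p dvd k" using k by (simp add: dvd_eq_mod_eq_0)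
    then show ?thesis using prime_imp_coprime_nat[OF p(1)] by (simp add: coprime_power_left_iff)
  qed
  ultimately have c1: "p ^ r dvd (N+1 choose k)" by (simp add: coprime_dvd_mult_right_iff)
  have c2: "p ^ r dvd (2*k choose k) * (2*(N+1-k) choose (N+1-k))"
    using central_dvd_B[OF p N k] .
  have "p ^ r * p ^ r dvd (N+1 choose k) * ((2*k choose k) * (2*(N+1-k) choose (N+1-k)))"
    using c1 c2 by (rule mult_dvd_mono)
  then have "p ^ (2*r) dvd (N+1 choose k) * (2*k choose k) * (2*(N+1-k) choose (N+1-k))"
    by (simp only: mult_2 power_add mult.assoc)
  then have "int p ^ (2*r) dvd int ((N+1 choose k) * (2*k choose k) * (2*(N+1-k) choose (N+1-k)))"
    by (rule int_pow_dvd)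
  then show ?thesis unfolding A_def by (simp add: diff_mult_distrib2)
qed


theorem theorem3p2:
  fixes p m r :: nat
  assumes "prime p" and "odd p" and "m > 0" and "r > 0"
  shows "[S (m * p ^ r + 1) = 4 * int (m * p ^ r + 1) * S (m * p ^ (r - 1))] (mod int p ^ (2 * r))"
proof -
  have p: "prime p" "odd p" using assms by auto
  have r1: "r \<ge> 1" using assms by simp
  have p1: "p > 1" using prime_gt_1_nat[OF p(1)] .
  define N' where "N' = m * p ^ (r-1)"
  define N where "N = N' * p"
  have NN: "m * p ^ r = N" unfolding N_def N'_def using r1
    by (metis Suc_diff_1 assms(4) mult.assoc power_Suc2)
  define q where "q = int p ^ (2*r)"
  have pN': "p ^ (r-1) dvd N'" unfolding N'_def by simp
  have pN: "p ^ r dvd N" unfolding N_def N'_def using r1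
    by (metis Suc_diff_1 assms(4) mult.assoc mult.commute power_Suc2 dvd_triv_left)
  define I where "I = {0..N'}"
  define K0 where "K0 = (\<lambda>j. j*p) ` I"
  define K1 where "K1 = (\<lambda>j. j*p+1) ` I"
  define f where "f = A (N+1)"
  have sub: "K0 \<union> K1 \<subseteq> {0..N+1}"
  proof (rule subsetI)
    fix x assume "x \<in> K0 \<union> K1"
    then obtain j where j: "j \<le> N'" "x = j*p \<or> x = j*p+1" unfolding K0_def K1_def I_def by auto
    have "j*p \<le> N'*p" using j(1) by (rule mult_le_mono1)
    then have "x \<le> N'*p + 1" using j(2) by (elim disjE) linarith+
    then show "x \<in> {0..N+1}" unfolding N_def by simp
  qed
  have dis: "K0 \<inter> K1 = {}"
  proof -
    have "j*p \<noteq> i*p+1" for i j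
    proof
      assume "j*p = i*p+1"
      then have "(j*p) mod p = (i*p+1) mod p" by simp
      moreover have "(i*p+1) mod p = 1" 
        by (simp only: add.commute[of "i*p" 1] mod_mult_self1 mod_mult_self2 mod_less p1)
      ultimately show False by simp
    qed
    then show ?thesis unfolding K0_def K1_def by auto
  qed
  have inj0: "inj_on (\<lambda>j. j*p) I" using p1 by (auto simp: inj_on_def)
  have inj1: "inj_on (\<lambda>j. j*p+1) I" using p1 by (auto simp: inj_on_def)
  have "S (N+1) = sum f {0..N+1}" unfolding S_A f_def ..
  also have "\<dots> = sum f ({0..N+1} - (K0 \<union> K1)) + sum f (K0 \<union> K1)"
    by (rule sum.subset_diff[OF sub]) simp
  also have "sum f (K0 \<union> K1) = sum f K0 + sum f K1"
    by (rule sum.union_disjoint) (use dis in \<open>auto simp: K0_def K1_def I_def\<close>)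
  also have "sum f K0 = (\<Sum>j\<in>I. f (j*p))" unfolding K0_def using inj0 by (simp add: sum.reindex)
  also have "sum f K1 = (\<Sum>j\<in>I. f (j*p+1))" unfolding K1_def using inj1 by (simp add: sum.reindex)
  also have "\<dots> = (\<Sum>j\<in>I. f ((N'-j)*p))"
  proof (rule sum.cong[OF refl])
    fix j assume "j \<in> I"
    then have j: "j \<le> N'" unfolding I_def by simp
    have "j*p+1 \<le> N+1" unfolding N_def using j by simp
    then have "f (j*p+1) = f (N+1 - (j*p+1))" unfolding f_def by (rule A_sym[symmetric])
    also have "N+1 - (j*p+1) = (N'-j)*p" unfolding N_def by (simp add: diff_mult_distrib)
    finally show "f (j*p+1) = f ((N'-j)*p)" .
  qed
  also have "\<dots> = (\<Sum>j\<in>I. f (j*p))"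
    unfolding I_def using sum.atLeastAtMost_rev[of "\<lambda>j. f (j*p)" 0 N'] by simp
  finally have split: "S (N+1) = sum f ({0..N+1} - (K0 \<union> K1)) + ((\<Sum>j\<in>I. f (j*p)) + (\<Sum>j\<in>I. f (j*p)))" .
  have R0: "q dvd sum f ({0..N+1} - (K0 \<union> K1))"
  proof (rule dvd_sum)
    fix k assume k: "k \<in> {0..N+1} - (K0 \<union> K1)"
    then have kN: "k \<le> N+1" by simp
    have kd: "k div p \<in> I"
    proof -
      have "k div p \<le> (N'*p+1) div p" using kN unfolding N_def by (rule div_le_mono)
      also have "(N'*p+1) div p = N'"
      proof -
        have "(1 + N'*p) div p = N' + 1 div p" using p1 by (intro div_mult_self1) simp
        then show ?thesis using p1 by (simp add: add.commute)
      qed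
      finally show ?thesis unfolding I_def by simp
    qed
    have m0: "k mod p \<noteq> 0"
    proof
      assume "k mod p = 0"
      then have "k = (k div p) * p" by (metis div_mult_mod_eq add_0_right)
      then have "k \<in> K0" unfolding K0_def using kd by blast
      then show False using k by blast
    qed
    have m1: "k mod p \<noteq> 1"
    proof
      assume "k mod p = 1"
      then have "k = (k div p) * p + 1" by (metis div_mult_mod_eq)
      then have "k \<in> K1" unfolding K1_def using kd by blast
      then show False using k by blast
    qed
    show "q dvd f k" unfolding q_def f_def using T2[OF p pN kN m0 m1] .
  qed
  have T: "[(\<Sum>j\<in>I. f (j*p)) = (\<Sum>j\<in>I. 2 * int (N+1) * A N' j)] (mod q)"
  proof (rule cong_sum)
    fix j assume "j \<in> I"
    then have j: "j \<le> N'" unfolding I_def by simp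
    show "[f (j*p) = 2 * int (N+1) * A N' j] (mod q)"
      unfolding f_def q_def N_def using T0[OF p r1 pN' j] .
  qed
  have "[S (N+1) = 0 + ((\<Sum>j\<in>I. 2 * int (N+1) * A N' j) + (\<Sum>j\<in>I. 2 * int (N+1) * A N' j))] (mod q)"
    unfolding split using R0 T by (intro cong_add) (auto simp: cong_0_iff)
  also have "0 + ((\<Sum>j\<in>I. 2 * int (N+1) * A N' j) + (\<Sum>j\<in>I. 2 * int (N+1) * A N' j)) = 4 * int (N+1) * S N'"
    unfolding S_A I_def by (simp add: sum_distrib_left[symmetric])
  finally show ?thesis unfolding NN q_def N'_def .
qed
end
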